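(* Let $V$ be a real Hilbert space, $W\subset V$ a finite-dimensional subspace, and $\mathcal M\subset V$ a compact set. For $\sigma\ge0$ let $\mathcal M_\sigma=\{v\in V:\operatorname{dist}(v,\mathcal M)\le\sigma\}$, $$\delta_\sigma=\sup\{\|u-v\|: u,v\in\mathcal M_\sigma,\ u-v\in W^\perp\},\qquad \tilde\delta_\sigma=\sup\{\|u-v\|: u,v\in\mathcal M,\ \|P_Wu-P_Wv\|\le\sigma\}.$$ Then for every $\sigma>0$, $$\delta_\sigma-2\sigma\le\tilde\delta_{2\sigma}\le\delta_\sigma+2\sigma.$$
   Context: $P_W$ is the orthogonal projection onto $W$, $W^\perp$ its orthogonal complement, and $\operatorname{dist}(v,\mathcal M)=\inf_{u\in\mathcal M}\|v-u\|$. *)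

theory Defs
  imports "HOL-Analysis.Analysis"
begin

definition orth_proj :: "'a::real_inner set \<Rightarrow> 'a \<Rightarrow> 'a" where
  "orth_proj W v = (THE p. p \<in> W \<and> v - p \<in> orthogonal_comp W)"

definition nbhd_set :: "'a::real_inner set \<Rightarrow> real \<Rightarrow> 'a set" where
  "nbhd_set M \<sigma> = {v. infdist v M \<le> \<sigma>}"

definition delta :: "'a::real_inner set \<Rightarrow> 'a set \<Rightarrow> real \<Rightarrow> real" where
  "delta W M \<sigma> = Sup {norm (u - v) | u v. u \<in> nbhd_set M \<sigma> \<and> v \<in> nbhd_set M \<sigma> \<and> u - v \<in> orthogonal_comp W}"

definition delta_tilde :: "'a::real_inner set \<Rightarrow> 'a set \<Rightarrow> real \<Rightarrow> real" where
  "delta_tilde W M \<sigma> = Sup {norm (u - v) | u v. u \<in> M \<and> v \<in> M \<and> norm (orth_proj W u - orth_proj W v) \<le> \<sigma>}"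

end

theory Submission
  imports Defs
begin

lemma GS_step_fin:
  fixes S :: "'a::real_inner set"
  assumes fin: "finite S" and S: "pairwise orthogonal S" and x: "x \<in> span S"
    shows "orthogonal x (a - (\<Sum>b\<in>S. (b \<bullet> a / (b \<bullet> b)) *\<^sub>R b))"
proof -
  have "orthogonal (a - (\<Sum>b\<in>S. (b \<bullet> a / (b \<bullet> b)) *\<^sub>R b)) x"
       if "x \<in> S" for x
  proof -
    have "a \<bullet> x = (\<Sum>y\<in>S. if y = x then y \<bullet> a else 0)"
      by (simp add: fin inner_commute that)
    also have "\<dots> =  (\<Sum>b\<in>S. b \<bullet> a * (b \<bullet> x) / (b \<bullet> b))"
      apply (rule sum.cong [OF refl], simp)
      by (meson S orthogonal_def pairwise_def that)
   finally show ?thesis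
     by (simp add: orthogonal_def algebra_simps inner_sum_left)
  qed
  then show ?thesis
    using orthogonal_to_span orthogonal_commute x by blast
qed

lemma GS_aux:
  fixes S :: "'a::real_inner set"
  assumes "finite T" "finite S" "pairwise orthogonal S"
    shows "\<exists>U. finite U \<and> pairwise orthogonal (S \<union> U) \<and> span (S \<union> U) = span (S \<union> T)"
using assms
proof (induction arbitrary: S)
  case empty then show ?case
    by (rule_tac x="{}" in exI) simp
next
  case (insert a T)
  define a' where "a' = a - (\<Sum>b\<in>S. (b \<bullet> a / (b \<bullet> b)) *\<^sub>R b)"
  have "pairwise orthogonal (insert a' S)"
  proof (rule pairwise_orthogonal_insert)
    show "pairwise orthogonal S" using insert.prems by simp
    show "orthogonal a' y" if "y \<in> S" for y
      using insert.prems GS_step_fin[of S y a] a'_def orthogonal_commute span_base that by metis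
  qed
  then obtain U where finU: "finite U" and orthU: "pairwise orthogonal (insert a' S \<union> U)"
             and spanU: "span (insert a' S \<union> U) = span (insert a' S \<union> T)"
    using insert.IH [of "insert a' S"] insert.prems by auto
  have "span (S \<union> insert a' U) = span (insert a' (S \<union> T))"
    using spanU by simp
  also have "\<dots> = span (insert a (S \<union> T))"
    by (simp add: a'_def span_neg span_sum span_base span_mul eq_span_insert_eq)
  also have "\<dots> = span (S \<union> insert a T)"
    by simp
  finally show ?case
    using orthU finU by (rule_tac x="insert a' U" in exI) auto
qed

lemma proj_exists:
  fixes B :: "'a::real_inner set"
  assumes "finite B"
  shows "\<exists>p\<in>span B. v - p \<in> orthogonal_comp (span B)"
proof -
  obtain U where U: "finite U" "pairwise orthogonal U" "span U = span B"
    using GS_aux[of B "{}"] assms by auto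
  define p where "p = (\<Sum>b\<in>U. (b \<bullet> v / (b \<bullet> b)) *\<^sub>R b)"
  have "p \<in> span U" unfolding p_def
    by (intro span_sum span_mul span_base) auto
  moreover have "v - p \<in> orthogonal_comp (span U)"
    using GS_step_fin[OF U(1) U(2)] unfolding orthogonal_comp_def p_def by auto
  ultimately show ?thesis using U(3) by auto
qed

context
  fixes W :: "'a::real_inner set"
  assumes W: "subspace W" "\<And>v. \<exists>p\<in>W. v - p \<in> orthogonal_comp W"
begin

lemma P_props: "orth_proj W v \<in> W \<and> v - orth_proj W v \<in> orthogonal_comp W"
proof -
  have "\<exists>!p. p \<in> W \<and> v - p \<in> orthogonal_comp W"
  proof -
    obtain p where p: "p \<in> W" "v - p \<in> orthogonal_comp W" using W(2) by blast
    moreover have "q = p" if "q \<in> W" "v - q \<in> orthogonal_comp W" for q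
    proof -
      have "p - q \<in> W" using W(1) p that by (simp add: subspace_diff)
      moreover have "p - q = (v - q) - (v - p)" by simp
      hence "p - q \<in> orthogonal_comp W"
        using that p subspace_orthogonal_comp by (metis subspace_diff)
      ultimately have "orthogonal (p - q) (p - q)" unfolding orthogonal_comp_def by auto
      thus ?thesis by (simp add: orthogonal_def)
    qed
    ultimately show ?thesis by blast
  qed
  thus ?thesis unfolding orth_proj_def by (rule theI')
qed

lemma P_unique: "p \<in> W \<Longrightarrow> v - p \<in> orthogonal_comp W \<Longrightarrow> orth_proj W v = p"
proof -
  assume p: "p \<in> W" "v - p \<in> orthogonal_comp W"
  let ?q = "orth_proj W v"
  have q: "?q \<in> W" "v - ?q \<in> orthogonal_comp W" using P_props by auto
  have "p - ?q \<in> W" using W(1) p q by (simp add: subspace_diff)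
  moreover have "p - ?q = (v - ?q) - (v - p)" by simp
  hence "p - ?q \<in> orthogonal_comp W"
    using q p subspace_orthogonal_comp by (metis subspace_diff)
  ultimately have "orthogonal (p - ?q) (p - ?q)" unfolding orthogonal_comp_def by auto
  thus ?thesis by (simp add: orthogonal_def)
qed

lemma P_diff: "orth_proj W u - orth_proj W v = orth_proj W (u - v)"
proof -
  have "orth_proj W u - orth_proj W v \<in> W" using P_props W(1) by (simp add: subspace_diff)
  moreover have "(u - v) - (orth_proj W u - orth_proj W v) =
     (u - orth_proj W u) - (v - orth_proj W v)" by simp
  hence "(u - v) - (orth_proj W u - orth_proj W v) \<in> orthogonal_comp W"
    using P_props subspace_orthogonal_comp by (metis subspace_diff)
  ultimately show ?thesis using P_unique by metis
qed

lemma P_perp: "x \<in> orthogonal_comp W \<Longrightarrow> orth_proj W x = 0"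
  by (rule P_unique) (auto simp: W(1) subspace_0)

lemma P_id: "x \<in> W \<Longrightarrow> orth_proj W x = x"
  by (rule P_unique) (auto simp: subspace_0 subspace_orthogonal_comp)

lemma P_norm: "norm (orth_proj W x) \<le> norm x"
proof -
  let ?p = "orth_proj W x"
  have "?p \<bullet> (x - ?p) = 0" using P_props[of x] unfolding orthogonal_comp_def orthogonal_def by auto
  hence "norm x ^ 2 = norm ?p ^ 2 + norm (x - ?p) ^ 2"
    by (metis (no_types, lifting) add_diff_cancel_left' diff_add_cancel norm_add_Pythagorean orthogonal_def)
  hence "norm ?p ^ 2 \<le> norm x ^ 2" by simp
  thus ?thesis by (simp add: power_mono_iff)
qed

end

theorem mainTheorem6:
  fixes W M :: "'a::{real_inner, complete_space} set" and \<sigma> :: real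
  assumes "subspace W" and "\<exists>B. finite B \<and> W = span B"
    and "compact M" and "M \<noteq> {}"
    and "\<sigma> > 0"
  shows "delta W M \<sigma> - 2 * \<sigma> \<le> delta_tilde W M (2 * \<sigma>) \<and>
         delta_tilde W M (2 * \<sigma>) \<le> delta W M \<sigma> + 2 * \<sigma>"
proof -
  obtain B where B: "finite B" "W = span B" using assms(2) by blast
  have Wex: "\<And>v. \<exists>p\<in>W. v - p \<in> orthogonal_comp W"
    using proj_exists[OF B(1)] B(2) by blast
  note Pp = P_props[OF assms(1) Wex] and Pd = P_diff[OF assms(1) Wex]
    and Pn = P_norm[OF assms(1) Wex] and Pz = P_perp[OF assms(1) Wex]
  define P where "P = orth_proj W"
  obtain R where R: "\<And>x. x \<in> M \<Longrightarrow> norm x \<le> R"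
    using compact_imp_bounded[OF assms(3)] by (auto simp: bounded_iff)
  have near: "\<exists>x\<in>M. dist u x \<le> \<sigma>" if "u \<in> nbhd_set M \<sigma>" for u
  proof -
    have "continuous_on M (dist u)" by (intro continuous_intros)
    then obtain x where x: "x \<in> M" "\<And>y. y \<in> M \<Longrightarrow> dist u x \<le> dist u y"
      using continuous_attains_inf[OF assms(3) assms(4)] by blast
    have "dist u x \<le> infdist u M"
      unfolding infdist_def using assms(4) x by (auto intro: cINF_greatest)
    thus ?thesis using that x(1) unfolding nbhd_set_def by force
  qed
  define S1 where "S1 = {norm (u - v) | u v. u \<in> nbhd_set M \<sigma> \<and> v \<in> nbhd_set M \<sigma> \<and> u - v \<in> orthogonal_comp W}"
  define S2 where "S2 = {norm (u - v) | u v. u \<in> M \<and> v \<in> M \<and> norm (orth_proj W u - orth_proj W v) \<le> 2 * \<sigma>}"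
  have d1: "delta W M \<sigma> = Sup S1" unfolding delta_def S1_def ..
  have d2: "delta_tilde W M (2 * \<sigma>) = Sup S2" unfolding delta_tilde_def S2_def ..
  obtain m where m: "m \<in> M" using assms(4) by blast
  have mn: "m \<in> nbhd_set M \<sigma>" using m assms(5) by (simp add: nbhd_set_def infdist_zero)
  have z: "(0::'a) \<in> orthogonal_comp W" by (simp add: subspace_0 subspace_orthogonal_comp)
  have S1ne: "S1 \<noteq> {}" unfolding S1_def using mn z by force
  have S2ne: "S2 \<noteq> {}" unfolding S2_def using m assms(5) by force
  have nb: "norm u \<le> R + \<sigma>" if un: "u \<in> nbhd_set M \<sigma>" for u
  proof -
    obtain x where "x \<in> M" "dist u x \<le> \<sigma>" using near[OF un] by blast
    thus ?thesis using R[of x] norm_triangle_ineq[of "u - x" x] by (simp add: dist_norm)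
  qed
  have S1bd: "bdd_above S1" unfolding S1_def bdd_above_def
  proof (intro exI[of _ "2*(R+\<sigma>)"] ballI)
    fix y assume "y \<in> {norm (u - v) | u v. u \<in> nbhd_set M \<sigma> \<and> v \<in> nbhd_set M \<sigma> \<and> u - v \<in> orthogonal_comp W}"
    then obtain u v where "y = norm (u - v)" "u \<in> nbhd_set M \<sigma>" "v \<in> nbhd_set M \<sigma>" by blast
    thus "y \<le> 2*(R+\<sigma>)" using nb[of u] nb[of v] norm_triangle_ineq4[of u v] by simp
  qed
  have S2bd: "bdd_above S2" unfolding S2_def bdd_above_def
  proof (intro exI[of _ "2*R"] ballI)
    fix y assume "y \<in> {norm (u - v) | u v. u \<in> M \<and> v \<in> M \<and> norm (orth_proj W u - orth_proj W v) \<le> 2 * \<sigma>}"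
    then obtain u v where "y = norm (u - v)" "u \<in> M" "v \<in> M" by blast
    thus "y \<le> 2*R" using R[of u] R[of v] norm_triangle_ineq4[of u v] by simp
  qed
  have I1: "Sup S1 \<le> Sup S2 + 2 * \<sigma>"
  proof (rule cSup_least[OF S1ne])
    fix y assume "y \<in> S1"
    then obtain u v where uv: "y = norm (u - v)" "u \<in> nbhd_set M \<sigma>" "v \<in> nbhd_set M \<sigma>"
      "u - v \<in> orthogonal_comp W" unfolding S1_def by blast
    obtain u0 where u0: "u0 \<in> M" "dist u u0 \<le> \<sigma>" using near uv(2) by blast
    obtain v0 where v0: "v0 \<in> M" "dist v v0 \<le> \<sigma>" using near uv(3) by blast
    have e: "P u0 - P v0 = P (u0 - u) - P (v0 - v) + P (u - v)"
      unfolding P_def by (simp add: Pd[symmetric])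
    have "P (u - v) = 0" unfolding P_def using Pz uv(4) by blast
    moreover have "norm (P (u0 - u)) \<le> \<sigma>" "norm (P (v0 - v)) \<le> \<sigma>"
      using Pn[of "u0 - u"] Pn[of "v0 - v"] u0 v0 unfolding P_def
      by (auto simp: dist_norm norm_minus_commute)
    ultimately have "norm (P u0 - P v0) \<le> 2 * \<sigma>"
      using e norm_triangle_ineq4[of "P (u0 - u)" "P (v0 - v)"] by simp
    hence "norm (u0 - v0) \<in> S2" unfolding S2_def P_def using u0 v0 by blast
    hence "norm (u0 - v0) \<le> Sup S2" using cSup_upper S2bd by blast
    moreover have "norm (u - v) \<le> norm (u - u0) + norm (u0 - v0) + norm (v0 - v)"
      using norm_triangle_ineq[of "u - u0" "u0 - v0"] norm_triangle_ineq[of "u - v0" "v0 - v"]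
      by (simp add: algebra_simps)
    ultimately show "y \<le> Sup S2 + 2 * \<sigma>"
      using uv(1) u0 v0 by (simp add: dist_norm norm_minus_commute)
  qed
  have I2: "Sup S2 \<le> Sup S1 + 2 * \<sigma>"
  proof (rule cSup_least[OF S2ne])
    fix y assume "y \<in> S2"
    then obtain u v where uv: "y = norm (u - v)" "u \<in> M" "v \<in> M"
      "norm (P u - P v) \<le> 2 * \<sigma>" unfolding S2_def P_def by blast
    define d where "d = P u - P v"
    have dd: "d = P (u - v)" unfolding d_def P_def by (simp add: Pd)
    define u' where "u' = u - (1/2) *\<^sub>R d"
    define v' where "v' = v + (1/2) *\<^sub>R d"
    have nd: "norm d \<le> 2 * \<sigma>" using uv(4) d_def by simp
    have "infdist u' M \<le> \<sigma>"
      by (rule infdist_le2[OF uv(2)]) (use nd in \<open>simp add: u'_def dist_norm\<close>)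
    hence u'n: "u' \<in> nbhd_set M \<sigma>" by (simp add: nbhd_set_def)
    have "infdist v' M \<le> \<sigma>"
      by (rule infdist_le2[OF uv(3)]) (use nd in \<open>simp add: v'_def dist_norm\<close>)
    hence v'n: "v' \<in> nbhd_set M \<sigma>" by (simp add: nbhd_set_def)
    have "u' - v' = (u - v) - d" unfolding u'_def v'_def by (simp add: algebra_simps flip: scaleR_add_left)
    hence "u' - v' \<in> orthogonal_comp W" using Pp[of "u - v"] dd P_def by simp
    hence "norm (u' - v') \<in> S1" unfolding S1_def using u'n v'n by blast
    hence "norm (u' - v') \<le> Sup S1" using cSup_upper S1bd by blast
    moreover have "norm (u - v) \<le> norm (u' - v') + norm d"
      using \<open>u' - v' = (u - v) - d\<close> norm_triangle_ineq[of "u' - v'" d] by simp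
    ultimately show "y \<le> Sup S1 + 2 * \<sigma>" using uv(1) nd by simp
  qed
  show ?thesis using I1 I2 d1 d2 by simp
qed

end
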